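(* Let $v\ge1$ and write $S_{m,v,1}=\sum_{i=0}^{v}q_{v,i}\,m^{2i}$ (identity valid for all integers $m\ge1$). Then $$q_{v,v}=\frac{2\zeta(2v)}{\pi^{2v}},\qquad q_{v,i}=\frac{2^{2v-2i+1}}{\pi^{2i}}\frac{\Gamma(2i)}{\Gamma(2v)}s(v,v-i)\zeta(2i)=\frac{2}{\pi^{2i}}\,c_{2v,v-i}\,\zeta(2i)\quad(1\le i\le v-1),$$ $$q_{v,0}=-2^{2v+1}\sum_{n=0}^{v-1}(2\pi)^{2n-2v}\frac{\Gamma(2v-2n)}{\Gamma(2v)}s(v,n)\zeta(2v-2n)=-2\sum_{n=0}^{v-1}\pi^{2n-2v}c_{2v,n}\zeta(2v-2n),$$ and $$q_{v,1}=\frac16\,\frac{\Gamma(v)\Gamma(1/2)}{\Gamma(v+1/2)}.$$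
   Context: $S_{m,v,1}=\sum_{k=1}^{m-1}\csc^{2v}(k\pi/m)$ is the untwisted Dowker sum, which for fixed $v$ agrees for all integers $m\ge1$ with a polynomial in $m^2$ of degree $v$. For integers $v\ge1$ and $0\le n\le v-1$, $s(v,n)$ denotes the $n$-th elementary symmetric polynomial evaluated at $1^2,2^2,\dots,(v-1)^2$, with $s(v,0)=1$. The generalized cosecant numbers $c_{\rho,k}$ are the coefficients in $\left(\frac{x}{\sin x}\right)^{\rho}=\sum_{k\ge0}c_{\rho,k}x^{2k}$. $\zeta$ is the Riemann zeta function. *)

theory Defs
  imports "HOL-Analysis.Analysis" "HOL-Computational_Algebra.Formal_Power_Series"
begin

definition dowker_sum :: "nat \<Rightarrow> nat \<Rightarrow> real" where
  "dowker_sum m v = (\<Sum>k=1..<m. (1 / sin (real k * pi / real m)) ^ (2 * v))"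

definition esym_sq :: "nat \<Rightarrow> nat \<Rightarrow> real" where
  "esym_sq v n = (\<Sum>A\<in>{A. A \<subseteq> {1..<v} \<and> card A = n}. \<Prod>j\<in>A. real j ^ 2)"

text \<open>Generalized cosecant numbers: (x / sin x)^rho = sum_k c_{rho,k} x^(2k).\<close>
definition cosec_num :: "nat \<Rightarrow> nat \<Rightarrow> real" where
  "cosec_num \<rho> k = fps_nth ((inverse (fps_shift 1 (fps_sin (1::real)))) ^ \<rho>) (2 * k)"

text \<open>Riemann zeta at integer arguments s \<ge> 2 (Dirichlet series).\<close>
definition zeta_int :: "nat \<Rightarrow> real" where
  "zeta_int s = (\<Sum>n. 1 / real (Suc n) ^ s)"

end

theory Submission
  imports Defs
begin

definition Sf :: "real fps" where "Sf = fps_shift 1 (fps_sin 1)"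
definition Wf :: "real fps" where "Wf = inverse Sf"

lemma Sf_0: "fps_nth Sf 0 = 1" by (simp add: Sf_def fps_sin_def)

lemma sin_eq: "fps_sin (1::real) = fps_X * Sf"
  by (rule fps_ext) (auto simp: Sf_def fps_X_mult_nth fps_sin_def)

lemma SW: "Sf * Wf = 1" using Sf_0 by (simp add: Wf_def inverse_mult_eq_1')

lemma X_eq: "fps_X = fps_sin 1 * Wf"
  by (simp add: sin_eq mult.assoc SW)

lemma E1: "fps_sin 1 * fps_deriv Wf + fps_cos 1 * Wf = 1"
proof -
  have "fps_deriv (fps_sin 1 * Wf) = 1" by (simp flip: X_eq)
  thus ?thesis by (simp add: fps_sin_deriv)
qed

lemma E2: "fps_sin 1 * fps_deriv (fps_deriv Wf) = fps_sin 1 * Wf - 2 * fps_cos 1 * fps_deriv Wf"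
proof -
  have "fps_deriv (fps_sin 1 * fps_deriv Wf + fps_cos 1 * Wf) = 0" by (simp add: E1)
  hence "fps_sin 1 * fps_deriv (fps_deriv Wf) + fps_cos 1 * fps_deriv Wf + fps_cos 1 * fps_deriv Wf - fps_sin 1 * Wf = 0"
    by (simp add: fps_sin_deriv fps_cos_deriv algebra_simps fps_const_neg[symmetric] del: fps_const_neg)
  thus ?thesis by (simp add: algebra_simps)
qed

lemma pyth: "fps_cos (1::real) ^ 2 + fps_sin 1 ^ 2 = 1" by (rule fps_sin_cos_sum_of_squares)

lemma ode:
  fixes k :: nat
  defines "N \<equiv> (of_nat (k+2) :: real fps)"
  shows "fps_X^2 * fps_deriv (fps_deriv (Wf^(k+2))) - 2 * N * fps_X * fps_deriv (Wf^(k+2))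
     + N * (N+1) * Wf^(k+2) + N^2 * fps_X^2 * Wf^(k+2) = N * (N+1) * Wf^(k+4)"
proof -
  define s where "s = fps_sin (1::real)"
  define c where "c = fps_cos (1::real)"
  define W1 where "W1 = fps_deriv Wf"
  define W2 where "W2 = fps_deriv W1"
  define P where "P = Wf ^ k"
  have h1: "s * W1 = 1 - c * Wf" using E1 unfolding s_def c_def W1_def by (simp add: algebra_simps)
  have h2: "s * W2 = s * Wf - 2 * c * W1" using E2 unfolding s_def c_def W1_def W2_def by simp
  have h3: "c^2 + s^2 = 1" using pyth unfolding s_def c_def .
  have hX: "fps_X = s * Wf" using X_eq unfolding s_def .
  have d1: "fps_deriv (Wf^(k+2)) = N * W1 * P * Wf"
    unfolding fps_deriv_power' N_def W1_def P_def by (simp add: mult_ac)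
  have d2: "fps_deriv (fps_deriv (Wf^(k+2))) = N * (W2 * P * Wf + (N - 1) * W1^2 * P)"
  proof -
    have dP: "fps_deriv P * Wf = of_nat k * W1 * P"
      unfolding P_def W1_def fps_deriv_power' by (cases k) (simp_all add: algebra_simps)
    have "fps_deriv (N * W1 * P * Wf) = N * (W2 * P * Wf + W1 * (fps_deriv P * Wf) + W1 * P * W1)"
      by (simp add: N_def W2_def algebra_simps flip: W1_def)
    also have "\<dots> = N * (W2 * P * Wf + (N - 1) * W1^2 * P)"
      unfolding dP by (simp add: N_def W1_def algebra_simps power2_eq_square)
    finally show ?thesis unfolding d1 .
  qed
  have pw: "Wf^(k+2) = P * Wf^2" "Wf^(k+4) = P * Wf^4" by (simp_all add: P_def power_add power2_eq_square)
  show ?thesis unfolding d2 unfolding d1 unfolding pw hX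
    using h1 h2 h3 by algebra
qed

lemma coef_gen:
  fixes G H :: "real fps"
  assumes e: "fps_X^2 * fps_deriv (fps_deriv G) - 2 * of_nat n * fps_X * fps_deriv G
     + of_nat n * (of_nat n + 1) * G + (of_nat n)^2 * fps_X^2 * G = of_nat n * (of_nat n + 1) * H"
    and m: "m \<ge> 2"
  shows "real n * (real n + 1) * fps_nth H m
     = (real m * (real m - 1) - 2 * real n * real m + real n * (real n + 1)) * fps_nth G m
       + real n ^ 2 * fps_nth G (m-2)"
proof -
  have a: "2 * (of_nat n::real fps) * fps_X * F = fps_X * (fps_const (2 * real n) * F)" for F
    unfolding fps_of_nat[symmetric] numeral_fps_const by (simp add: algebra_simps)
  have b: "(of_nat n::real fps)^2 * fps_X^2 * F = fps_X^2 * (fps_const (real n ^ 2) * F)" for F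
    unfolding fps_of_nat[symmetric] by (simp add: algebra_simps)
  have c: "(of_nat n::real fps) * (of_nat n+1) * F = fps_const (real n * (real n + 1)) * F" for F
    unfolding fps_of_nat[symmetric] fps_const_1_eq_1[symmetric] fps_const_add by (simp add: algebra_simps)
  have m1: "m - 2 + 1 = m - 1" "m - 1 + 1 = m" "m - 2 + 2 = m" "\<not> m < 2" "\<not> m < 1" "m \<noteq> 0" using m by auto
  have "fps_nth (fps_X^2 * fps_deriv (fps_deriv G) - fps_X * (fps_const (2 * real n) * fps_deriv G)
     + fps_const (real n * (real n + 1)) * G + fps_X^2 * (fps_const (real n ^ 2) * G)) m
     = fps_nth (fps_const (real n * (real n + 1)) * H) m"
    using e unfolding a b c by simp
  hence "real (m - 2 + 1) * (real (m - 2 + 1 + 1) * fps_nth G m) - 2 * real n * (real (m - 1 + 1) * fps_nth G m)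
     + real n * (real n + 1) * fps_nth G m + real n ^ 2 * fps_nth G (m - 2)
     = real n * (real n + 1) * fps_nth H m"
    unfolding fps_add_nth fps_sub_nth fps_X_power_mult_nth fps_X_mult_nth fps_deriv_nth fps_mult_left_const_nth
    using m1 by (simp del: of_nat_add add: m1)
  moreover have "real (m - 2 + 1) = real m - 1" "real (m - 2 + 1 + 1) = real m" "real (m-1+1) = real m"
    using m by auto
  ultimately show ?thesis by (simp add: algebra_simps)
qed

lemma rec_coef:
  assumes v: "v \<ge> 1" and m: "m \<ge> 2"
  shows "real (2 * v) * (real (2 * v) + 1) * fps_nth (Wf^(2 * v+2)) m
     = (real m * (real m - 1) - 2 * real (2 * v) * real m + real (2 * v) * (real (2 * v) + 1)) * fps_nth (Wf^(2 * v)) m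
       + real (2 * v) ^ 2 * fps_nth (Wf^(2 * v)) (m-2)"
proof -
  define k where "k = 2 * v - 2"
  have k: "2 * v = k+2" using v by (simp add: k_def)
  have k4: "2 * v+2 = k+4" using k by simp
  show ?thesis unfolding k4 unfolding k by (rule coef_gen[OF ode m])
qed

lemma cosec_Wf: "cosec_num r k = fps_nth (Wf^r) (2*k)"
  by (simp add: cosec_num_def Wf_def Sf_def)

lemma Wf_0: "fps_nth Wf 0 = 1"
  by (simp add: Wf_def Sf_0)

lemma cosec_0: "cosec_num r 0 = 1"
  by (simp add: cosec_Wf fps_nth_power_0 Wf_0)

lemma esym0: "esym_sq v 0 = 1"
proof -
  have "A \<subseteq> {1..<v} \<Longrightarrow> card A = 0 \<Longrightarrow> A = {}" for A
    using finite_subset[of A "{1..<v}"] by auto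
  hence "{A. A \<subseteq> {1..<v} \<and> card A = 0} = {{}}" by auto
  thus ?thesis by (simp add: esym_sq_def)
qed

lemma esym_top: "v \<ge> 1 \<Longrightarrow> esym_sq v v = 0"
proof -
  assume v: "v \<ge> 1"
  have "A \<subseteq> {1..<v} \<Longrightarrow> card A \<noteq> v" for A
    using card_mono[of "{1..<v}" A] v by auto
  hence e: "{A. A \<subseteq> {1..<v} \<and> card A = v} = {}" by auto
  show ?thesis unfolding esym_sq_def e by simp
qed

lemma esym_last: "v \<ge> 1 \<Longrightarrow> esym_sq v (v-1) = fact (v-1) ^ 2"
proof -
  assume v: "v \<ge> 1"
  have "A \<subseteq> {1..<v} \<Longrightarrow> card A = v - 1 \<Longrightarrow> A = {1..<v}" for A
    by (rule card_subset_eq) auto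
  hence "{A. A \<subseteq> {1..<v} \<and> card A = v - 1} = {{1..<v}}" by auto
  hence "esym_sq v (v-1) = (\<Prod>j\<in>{1..<v}. real j ^ 2)" by (simp add: esym_sq_def)
  also have "\<dots> = (\<Prod>j\<in>{1..v-1}. real j) ^ 2"
    using v by (simp add: prod_power_distrib atLeastLessThanSuc_atLeastAtMost[symmetric])
  also have "(\<Prod>j\<in>{1..v-1}. real j) = fact (v-1)"
    by (simp add: fact_prod)
  finally show ?thesis .
qed

lemma esym_rec:
  assumes v: "v \<ge> 1" and k: "k \<ge> 1"
  shows "esym_sq (Suc v) k = esym_sq v k + real v ^ 2 * esym_sq v (k-1)"
proof -
  let ?F = "\<lambda>u n. {A. A \<subseteq> {1..<u} \<and> card A = n}"
  have split: "?F (Suc v) k = ?F v k \<union> insert v ` ?F v (k-1)"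
  proof (rule equalityI)
    show "?F (Suc v) k \<subseteq> ?F v k \<union> insert v ` ?F v (k-1)"
    proof
      fix A assume "A \<in> ?F (Suc v) k"
      hence A: "A \<subseteq> {1..<Suc v}" "card A = k" by auto
      have fA: "finite A" using A(1) finite_subset by blast
      show "A \<in> ?F v k \<union> insert v ` ?F v (k-1)"
      proof (cases "v \<in> A")
        case True
        have "A - {v} \<subseteq> {1..<v}" using A(1) by auto
        moreover have "card (A - {v}) = k - 1" using A(2) True fA by simp
        moreover have "A = insert v (A - {v})" using True by auto
        ultimately show ?thesis by blast
      next
        case False
        have "x \<in> A \<Longrightarrow> x \<in> {1..<v}" for x using A(1) False by (cases "x = v"; force)
        hence "A \<subseteq> {1..<v}" by blast
        thus ?thesis using A(2) by blast
      qed
    qed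
  next
    show "?F v k \<union> insert v ` ?F v (k-1) \<subseteq> ?F (Suc v) k"
    proof
      fix A assume "A \<in> ?F v k \<union> insert v ` ?F v (k-1)"
      thus "A \<in> ?F (Suc v) k"
      proof
        assume "A \<in> ?F v k" thus ?thesis by auto
      next
        assume "A \<in> insert v ` ?F v (k-1)"
        then obtain B where B: "B \<subseteq> {1..<v}" "card B = k - 1" "A = insert v B" by auto
        have "finite B" using B(1) finite_subset by blast
        moreover have "v \<notin> B" using B(1) by auto
        ultimately have "card A = k" using B k by simp
        moreover have "A \<subseteq> {1..<Suc v}" using B v by auto
        ultimately show ?thesis by simp
      qed
    qed
  qed
  have disj: "?F v k \<inter> insert v ` ?F v (k-1) = {}" by auto
  have inj: "inj_on (insert v) (?F v (k-1))"
    by (rule inj_onI) (metis (no_types, lifting) atLeastLessThan_iff insert_ident less_irrefl mem_Collect_eq subsetD)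
  have fin: "finite (?F u n)" for u n :: nat
    by (rule finite_subset[of _ "Pow {1..<u}"]) auto
  have "esym_sq (Suc v) k = (\<Sum>A\<in>?F v k. \<Prod>j\<in>A. real j ^ 2) + (\<Sum>A\<in>insert v ` ?F v (k-1). \<Prod>j\<in>A. real j ^ 2)"
    unfolding esym_sq_def split by (rule sum.union_disjoint) (auto simp: fin disj)
  also have "(\<Sum>A\<in>insert v ` ?F v (k-1). \<Prod>j\<in>A. real j ^ 2) = (\<Sum>A\<in>?F v (k-1). \<Prod>j\<in>insert v A. real j ^ 2)"
    by (rule sum.reindex[OF inj, unfolded comp_def])
  also have "\<dots> = (\<Sum>A\<in>?F v (k-1). real v ^ 2 * (\<Prod>j\<in>A. real j ^ 2))"
  proof (rule sum.cong)
    fix A assume "A \<in> ?F v (k-1)"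
    hence "finite A" "v \<notin> A" using finite_subset by auto
    thus "(\<Prod>j\<in>insert v A. real j ^ 2) = real v ^ 2 * (\<Prod>j\<in>A. real j ^ 2)" by simp
  qed simp
  finally show ?thesis by (simp add: esym_sq_def sum_distrib_left)
qed

definition C2 :: "nat \<Rightarrow> nat \<Rightarrow> real" where
  "C2 v k = 4^k * fact (2* v-2*k-1) / fact (2* v-1) * esym_sq v k"

lemma alg1:
  fixes FV F1 v r P s1 s0 :: real
  assumes "FV \<noteq> 0" "v > 0" "r > 0"
  shows "((2*r)*(2*r+1)*(4*P*F1/FV* s1) + (2* v)^2*(P*((2*r+1)*(2*r)*F1)/FV* s0))/((2* v)*(2* v+1))
     = 4*P*((2*r+1)*(2*r)*F1)/((2* v+1)*(2* v)*FV)*(s1 + v^2* s0)"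
proof -
  have d: "(2* v)*(2* v+1) \<noteq> 0" "(2* v+1)*(2* v)*FV \<noteq> 0" using assms by auto
  have "((2*r)*(2*r+1)*(4*P*F1/FV* s1) + (2* v)^2*(P*((2*r+1)*(2*r)*F1)/FV* s0))
      = ((2*r)*(2*r+1)*4*P*F1*(s1 + v^2* s0))/FV" using assms
    by (simp add: field_simps power2_eq_square)
  thus ?thesis using d by (simp add: divide_simps)
qed

lemma solve_lin: "(a::real) \<noteq> 0 \<Longrightarrow> a * x = y \<Longrightarrow> x = y / a"
  by (simp add: field_simps)

lemma cosec_closed: "v \<ge> 1 \<Longrightarrow> k < v \<Longrightarrow> cosec_num (2* v) k = C2 v k"
proof (induction v arbitrary: k)
  case 0 thus ?case by simp
next
  case (Suc v)
  show ?case
  proof (cases "k = 0")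
    case True thus ?thesis by (simp add: cosec_0 C2_def esym0)
  next
    case False
    hence k1: "k \<ge> 1" by simp
    show ?thesis
    proof (cases "v = 0")
      case True thus ?thesis using Suc.prems k1 by simp
    next
      case False
      hence v1: "v \<ge> 1" by simp
      have kv: "k \<le> v" using Suc.prems by simp
      have r: "real (2* v) * (real (2* v) + 1) * cosec_num (2*Suc v) k
         = (real (2* v) - real (2*k)) * (real (2* v) - real (2*k) + 1) * cosec_num (2* v) k
           + real (2* v)^2 * cosec_num (2* v) (k-1)"
      proof -
        have "2*k - 2 = 2*(k-1)" by simp
        moreover have "2 * Suc v = 2* v+2" by simp
        ultimately show ?thesis using rec_coef[OF v1, of "2*k"] k1 unfolding cosec_Wf
          by (simp add: algebra_simps)
      qed
      have Apos: "real (2 * v) * (real (2 * v) + 1) \<noteq> 0" using v1 by simp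
      note r' = solve_lin[OF Apos r]
      have IHm: "cosec_num (2* v) (k-1) = C2 v (k-1)" using Suc.IH[OF v1] kv k1 by simp
      have F2v: "fact (2*Suc v - 1) = real (2* v+1) * real (2* v) * fact (2* v-1)"
        using v1 by (cases v) (simp_all add: algebra_simps)
      have p4: "(4::real)^k = 4 * 4^(k-1)" using k1 by (cases k) simp_all
      show ?thesis
      proof (cases "k = v")
        case True
        have "cosec_num (2*Suc v) k = real (2* v)^2 * C2 v (k-1) / (real (2* v) * (real (2* v) + 1))"
          using r' IHm True v1 by simp
        also have "\<dots> = C2 (Suc v) k"
        proof -
          have e0: "2 * v - 2 * (v - 1) - 1 = 1" "2 * Suc v - 2 * v - 1 = 1" "2 * Suc v - 1 = 2 * v + 1"
            using v1 by auto
          have F2: "fact (2 * v + 1) = real (2 * v + 1) * real (2 * v) * fact (2 * v - 1)"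
            using F2v by simp
          have p4': "(4::real)^v = 4 * 4^(v-1)" using p4 True by simp
          have es: "esym_sq (Suc v) v = real v ^ 2 * esym_sq v (v-1)"
            using esym_rec[OF v1 v1] esym_top[OF v1] by simp
          show ?thesis unfolding True C2_def e0 F2 p4' es
            using v1 by (simp add: field_simps)
        qed
        finally show ?thesis .
      next
        case False
        hence kv': "k < v" using kv by simp
        have IHk: "cosec_num (2* v) k = C2 v k" using Suc.IH[OF v1] kv' by simp
        define r where "r = v - k"
        have r1: "r \<ge> 1" using kv' by (simp add: r_def)
        have e1: "2* v-2*k-1 = 2*r - 1" "2* v-2*(k-1)-1 = 2*r+1" "2*Suc v - 2*k - 1 = 2*r+1"
          using kv' k1 by (simp_all add: r_def)
        have Fr: "fact (2*r+1) = real (2*r+1) * real (2*r) * fact (2*r-1)"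
          using r1 by (cases r) (simp_all add: algebra_simps)
        have vr: "real (2* v) - real (2*k) = real (2*r)" using kv' by (simp add: r_def)
        have "cosec_num (2*Suc v) k = ((real (2*r)) * (real (2*r) + 1) * C2 v k
           + real (2* v)^2 * C2 v (k-1)) / (real (2* v) * (real (2* v) + 1))"
          using r' IHm IHk v1 unfolding vr by simp
        also have "\<dots> = C2 (Suc v) k"
        proof -
          have e2: "2 * Suc v - 1 = 2 * v + 1" by simp
          have F2: "fact (2 * v + 1) = real (2 * v + 1) * real (2 * v) * fact (2 * v - 1)"
            using F2v by simp
          have conv: "real (2*r) = 2 * real r" "real (2*r+1) = 2*real r+1" "real (2* v) = 2*real v"
            "real (2* v+1) = 2*real v+1" by auto
          have FVnz: "(fact (2* v-1)::real) \<noteq> 0" by simp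
          have rpos: "real r > 0" using r1 by simp
          have vpos: "real v > 0" using v1 by simp
          show ?thesis unfolding C2_def e1 e2 F2 Fr p4 esym_rec[OF v1 k1] conv
            using alg1[OF FVnz vpos rpos, of "4^(k-1)" "fact (2*r-1)" "esym_sq v k" "esym_sq v (k-1)"]
            by (simp add: mult_ac)
        qed
        finally show ?thesis .
      qed
    qed
  qed
qed

definition reflf :: "real fps \<Rightarrow> real fps" where
  "reflf F = Abs_fps (\<lambda>n. (-1)^n * fps_nth F n)"

lemma reflf_nth: "fps_nth (reflf F) n = (-1)^n * fps_nth F n"
  by (simp add: reflf_def)

lemma reflf_mult: "reflf (F * G) = reflf F * reflf G"
proof (rule fps_ext)
  fix n
  have "fps_nth (reflf (F * G)) n = (\<Sum>i=0..n. (-1)^n * (fps_nth F i * fps_nth G (n - i)))"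
    by (simp add: reflf_nth fps_mult_nth sum_distrib_left)
  also have "\<dots> = (\<Sum>i=0..n. ((-1)^i * fps_nth F i) * ((-1)^(n-i) * fps_nth G (n - i)))"
  proof (rule sum.cong)
    fix i assume "i \<in> {0..n}"
    hence "(-1::real)^n = (-1)^i * (-1)^(n-i)" by (simp flip: power_add)
    thus "(-1)^n * (fps_nth F i * fps_nth G (n - i)) = ((-1)^i * fps_nth F i) * ((-1)^(n-i) * fps_nth G (n - i))"
      by simp
  qed simp
  also have "\<dots> = fps_nth (reflf F * reflf G) n" by (simp add: reflf_nth fps_mult_nth)
  finally show "fps_nth (reflf (F * G)) n = fps_nth (reflf F * reflf G) n" .
qed

lemma reflf_1: "reflf 1 = 1"
  by (rule fps_ext) (simp add: reflf_nth)

lemma reflf_power: "reflf (F ^ k) = reflf F ^ k"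
  by (induction k) (simp_all add: reflf_1 reflf_mult)

lemma reflf_Sf: "reflf Sf = Sf"
  by (rule fps_ext) (auto simp: reflf_nth Sf_def fps_sin_def)

lemma reflf_Wf: "reflf Wf = Wf"
proof -
  have "reflf Sf * reflf Wf = 1" by (simp flip: reflf_mult add: SW reflf_1)
  hence "Sf * reflf Wf = 1" by (simp add: reflf_Sf)
  hence "inverse Sf = reflf Wf" by (rule fps_inverse_unique)
  thus ?thesis by (simp add: Wf_def)
qed

lemma Wf_odd: "odd n \<Longrightarrow> fps_nth (Wf ^ r) n = 0"
proof -
  assume "odd n"
  have "fps_nth (Wf ^ r) n = fps_nth (reflf (Wf ^ r)) n" by (simp add: reflf_power reflf_Wf)
  also have "\<dots> = - fps_nth (Wf ^ r) n" using \<open>odd n\<close> by (simp add: reflf_nth)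
  finally show ?thesis by simp
qed

lemma has_fps_expansion_power':
  fixes F :: "real fps" and k :: nat
  assumes "f has_fps_expansion F"
  shows "(\<lambda>x. f x ^ k) has_fps_expansion F ^ k"
  by (induction k rule: nat.induct) (auto intro!: has_fps_expansion_mult assms)

definition wfun :: "real \<Rightarrow> real" where
  "wfun x = inverse (if x = 0 then 1 else sin x / x ^ 1)"

lemma wfun_exp: "wfun has_fps_expansion Wf"
proof -
  have sd: "1 \<le> subdegree (fps_sin (1::real))"
    by (rule subdegree_geI) (auto simp: fps_eq_iff fps_sin_def intro!: exI[of _ 1])
  have "(\<lambda>x::real. if x = 0 then 1 else sin x / x ^ 1) has_fps_expansion Sf"
    unfolding Sf_def by (rule has_fps_expansion_shift[OF has_fps_expansion_sin' sd]) (simp add: fps_sin_def)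
  hence "(\<lambda>x. inverse (if x = 0 then 1 else sin x / x ^ 1)) has_fps_expansion inverse Sf"
    by (rule has_fps_expansion_inverse) (simp add: Sf_0)
  thus ?thesis unfolding wfun_def[abs_def] Wf_def .
qed

lemma sum_even_odd: "(\<Sum>n<2*(N::nat). f n) = (\<Sum>j<N. f (2*j) + f (2*j+1))"
  by (induction N) (simp_all add: add_ac)

lemma local_bound:
  fixes N :: nat
  shows "\<exists>d>0. \<exists>K. \<forall>x. 0 < x \<and> x < d \<longrightarrow>
      \<bar>wfun x ^ N - (\<Sum>n<N. fps_nth (Wf^N) n * x^n)\<bar> \<le> K * x^N"
proof -
  define G where "G = Wf ^ N"
  define Q where "Q = (\<Sum>n<N. fps_const (fps_nth G n) * fps_X ^ n)"
  define D where "D = G - Q"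
  define E where "E = fps_shift N D"
  define f where "f = (\<lambda>x. wfun x ^ N - (\<Sum>n<N. fps_nth G n * x^n))"
  have eQ: "(\<lambda>x. \<Sum>n<N. fps_nth G n * x^n) has_fps_expansion Q"
    unfolding Q_def by (intro has_fps_expansion_sum has_fps_expansion_cmult_left has_fps_expansion_fps_X_power)
  have eD: "f has_fps_expansion D"
    unfolding f_def D_def G_def using eQ[unfolded G_def]
    by (intro has_fps_expansion_diff has_fps_expansion_power' wfun_exp)
  have Qn: "fps_nth Q i = (if i < N then fps_nth G i else 0)" for i
  proof -
    have eq: "(\<lambda>k. fps_nth G k * (if i = k then 1 else 0)) = (\<lambda>k. if i = k then fps_nth G k else 0)"
      by auto
    have eq2: "(\<Sum>k<N. fps_nth G k * (if i = k then 1 else 0)) = (\<Sum>k<N. if i = k then fps_nth G k else 0)"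
      by (rule sum.cong) auto
    show ?thesis by (simp add: Q_def fps_sum_nth fps_X_power_nth eq2)
  qed
  have DE: "D = E * fps_X ^ N"
    by (rule fps_ext) (simp add: E_def fps_X_power_mult_right_nth D_def Qn)
  have rad: "fps_conv_radius D > 0" and ev: "eventually (\<lambda>x. eval_fps D x = f x) (nhds 0)"
    using eD by (auto simp: has_fps_expansion_def)
  have radE: "fps_conv_radius E > 0" using rad by (simp add: E_def)
  have ev2: "eventually (\<lambda>x. x \<in> eball 0 (fps_conv_radius E)) (nhds 0)"
    using radE by (intro eventually_nhds_in_open) (auto simp: zero_ereal_def)
  have "isCont (eval_fps E) 0" using radE by (intro continuous_eval_fps) (simp add: zero_ereal_def)
  hence "((eval_fps E) \<longlongrightarrow> eval_fps E 0) (at 0)" by (simp add: isCont_def)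
  hence ev3: "eventually (\<lambda>x. dist (eval_fps E x) (eval_fps E 0) < 1) (at 0)" by (rule tendstoD) simp
  have "eventually (\<lambda>x. eval_fps D x = f x \<and> x \<in> eball 0 (fps_conv_radius E) \<and> dist (eval_fps E x) (eval_fps E 0) < 1) (at (0::real))"
  proof -
    have a1: "eventually (\<lambda>x. eval_fps D x = f x) (at (0::real))"
      using ev unfolding eventually_at_filter by (rule eventually_mono) simp
    have a2: "eventually (\<lambda>x. x \<in> eball 0 (fps_conv_radius E)) (at (0::real))"
      using ev2 unfolding eventually_at_filter by (rule eventually_mono) simp
    show ?thesis by (intro eventually_conj a1 a2 ev3)
  qed
  then obtain d where d: "d > 0" and P: "\<And>x. x \<noteq> 0 \<Longrightarrow> dist x 0 < d \<Longrightarrow>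
      eval_fps D x = f x \<and> x \<in> eball 0 (fps_conv_radius E) \<and> dist (eval_fps E x) (eval_fps E 0) < 1"
    unfolding eventually_at by auto
  show ?thesis
  proof (intro exI conjI allI impI)
    show "d > 0" by fact
    fix x :: real assume x: "0 < x \<and> x < d"
    from P[of x] x have P1: "eval_fps D x = f x" "norm x < fps_conv_radius E"
      and P2: "\<bar>eval_fps E x - eval_fps E 0\<bar> < 1" by (auto simp: dist_real_def)
    have "f x = eval_fps E x * x ^ N" unfolding P1(1)[symmetric] DE
      using P1(2) by (subst eval_fps_mult) simp_all
    hence "\<bar>f x\<bar> = \<bar>eval_fps E x\<bar> * x ^ N" using x by (simp add: abs_mult)
    also have "\<dots> \<le> (\<bar>eval_fps E 0\<bar> + 1) * x ^ N" using P2 x by (intro mult_right_mono) auto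
    finally show "\<bar>wfun x ^ N - (\<Sum>n<N. fps_nth (Wf^N) n * x^n)\<bar> \<le> (\<bar>eval_fps E 0\<bar> + 1) * x ^ N"
      by (simp add: f_def G_def)
  qed
qed

lemma wfun_pos: "x \<noteq> 0 \<Longrightarrow> wfun x = x / sin x"
  by (simp add: wfun_def)

lemma poly_even:
  fixes x :: real
  shows "(\<Sum>n<2* v. fps_nth (Wf^(2* v)) n * x^n) = (\<Sum>j<v. cosec_num (2* v) j * x^(2*j))"
  unfolding sum_even_odd by (simp add: Wf_odd cosec_Wf)

lemma phi_bound:
  assumes v: "v \<ge> 1"
  shows "\<exists>B. \<forall>x. 0 < x \<and> x \<le> pi/2 \<longrightarrow>
     \<bar>(1 / sin x)^(2* v) - (\<Sum>j<v. cosec_num (2* v) j * (1/x)^(2* v-2*j))\<bar> \<le> B"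
proof -
  define e where "e = (\<lambda>x::real. (1 / sin x)^(2* v) - (\<Sum>j<v. cosec_num (2* v) j * (1/x)^(2* v-2*j)))"
  obtain d K where d: "d > 0" and K: "\<And>x. 0 < x \<Longrightarrow> x < d \<Longrightarrow>
      \<bar>wfun x ^ (2* v) - (\<Sum>n<2* v. fps_nth (Wf^(2* v)) n * x^n)\<bar> \<le> K * x^(2* v)"
    using local_bound[of "2* v"] by blast
  have ex: "e x = (wfun x ^ (2* v) - (\<Sum>n<2* v. fps_nth (Wf^(2* v)) n * x^n)) / x^(2* v)" if x: "x > 0" for x
  proof -
    have "wfun x ^ (2* v) / x^(2* v) = (1 / sin x)^(2* v)"
      using x by (simp add: wfun_pos power_divide)
    moreover have "(\<Sum>j<v. cosec_num (2* v) j * x^(2*j)) / x^(2* v) = (\<Sum>j<v. cosec_num (2* v) j * (1/x)^(2* v-2*j))"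
      unfolding sum_divide_distrib
    proof (rule sum.cong)
      fix j assume "j \<in> {..<v}"
      hence "x^(2* v) = x^(2*j) * x^(2* v-2*j)" by (simp flip: power_add)
      thus "cosec_num (2* v) j * x^(2*j) / x^(2* v) = cosec_num (2* v) j * (1/x)^(2* v-2*j)"
        using x by (simp add: power_one_over field_simps)
    qed simp
    ultimately show ?thesis unfolding e_def poly_even by (simp add: diff_divide_distrib)
  qed
  have near: "\<bar>e x\<bar> \<le> K" if "0 < x" "x < d" for x
  proof -
    have "\<bar>e x\<bar> = \<bar>wfun x ^ (2* v) - (\<Sum>n<2* v. fps_nth (Wf^(2* v)) n * x^n)\<bar> / x^(2* v)"
      using that by (simp add: ex abs_divide)
    also have "\<dots> \<le> K * x^(2* v) / x^(2* v)" using K[OF that] that by (intro divide_right_mono) auto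
    also have "\<dots> = K" using that by simp
    finally show ?thesis .
  qed
  have cont: "continuous_on {d/2..pi/2} e"
  proof -
    have "\<forall>x\<in>{d/2..pi/2}. sin x \<noteq> 0 \<and> x \<noteq> 0"
    proof
      fix x assume "x \<in> {d/2..pi/2}"
      hence "0 < x" "x < pi" using d pi_gt3 by auto
      thus "sin x \<noteq> 0 \<and> x \<noteq> 0" using sin_gt_zero by force
    qed
    thus ?thesis unfolding e_def by (intro continuous_intros) auto
  qed
  obtain a where a: "\<And>y. y \<in> e ` {d/2..pi/2} \<Longrightarrow> norm y \<le> a"
    using compact_imp_bounded[OF compact_continuous_image[OF cont compact_Icc]] unfolding bounded_iff by blast
  show ?thesis
  proof (intro exI allI impI)
    fix x :: real assume x: "0 < x \<and> x \<le> pi/2"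
    show "\<bar>(1 / sin x)^(2* v) - (\<Sum>j<v. cosec_num (2* v) j * (1/x)^(2* v-2*j))\<bar> \<le> max K a"
    proof (cases "x < d")
      case True thus ?thesis using near[of x] x unfolding e_def by auto
    next
      case False
      hence "e x \<in> e ` {d/2..pi/2}" using x d by auto
      from a[OF this] show ?thesis unfolding e_def by auto
    qed
  qed
qed

lemma R_bound:
  assumes v: "v \<ge> 1"
  shows "\<exists>B. \<forall>x. 0 < x \<and> x < pi \<longrightarrow>
     \<bar>(1 / sin x)^(2* v) - (\<Sum>j<v. cosec_num (2* v) j * ((1/x)^(2* v-2*j) + (1/(pi-x))^(2* v-2*j)))\<bar> \<le> B"
proof -
  obtain B where B: "\<And>x. 0 < x \<Longrightarrow> x \<le> pi/2 \<Longrightarrow>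
     \<bar>(1 / sin x)^(2* v) - (\<Sum>j<v. cosec_num (2* v) j * (1/x)^(2* v-2*j))\<bar> \<le> B"
    using phi_bound[OF v] by blast
  define R where "R = (\<lambda>x. (1 / sin x)^(2* v) - (\<Sum>j<v. cosec_num (2* v) j * ((1/x)^(2* v-2*j) + (1/(pi-x))^(2* v-2*j))))"
  define B' where "B' = B + (\<Sum>j<v. \<bar>cosec_num (2* v) j\<bar> * (2/pi)^(2* v-2*j))"
  have half: "\<bar>R x\<bar> \<le> B'" if x: "0 < x" "x \<le> pi/2" for x
  proof -
    have R: "R x = ((1 / sin x)^(2* v) - (\<Sum>j<v. cosec_num (2* v) j * (1/x)^(2* v-2*j)))
        - (\<Sum>j<v. cosec_num (2* v) j * (1/(pi-x))^(2* v-2*j))"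
      by (simp add: R_def distrib_left sum.distrib)
    have "\<bar>\<Sum>j<v. cosec_num (2* v) j * (1/(pi-x))^(2* v-2*j)\<bar> \<le> (\<Sum>j<v. \<bar>cosec_num (2* v) j * (1/(pi-x))^(2* v-2*j)\<bar>)"
      by (rule sum_abs)
    also have "\<dots> \<le> (\<Sum>j<v. \<bar>cosec_num (2* v) j\<bar> * (2/pi)^(2* v-2*j))"
    proof (rule sum_mono)
      fix j assume "j \<in> {..<v}"
      have p: "pi - x \<ge> pi/2" using x by simp
      have "1/(pi-x) \<le> 2/pi" using p pi_gt3 by (simp add: field_simps)
      moreover have "0 \<le> 1/(pi-x)" using p pi_gt3 by simp
      ultimately have "(1/(pi-x))^(2* v-2*j) \<le> (2/pi)^(2* v-2*j)" by (rule power_mono)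
      moreover have "0 \<le> (1/(pi-x))^(2* v-2*j)" using \<open>0 \<le> 1/(pi-x)\<close> by simp
      ultimately show "\<bar>cosec_num (2* v) j * (1/(pi-x))^(2* v-2*j)\<bar> \<le> \<bar>cosec_num (2* v) j\<bar> * (2/pi)^(2* v-2*j)"
        by (simp add: abs_mult mult_left_mono)
    qed
    finally show ?thesis unfolding R B'_def using B[OF x] by linarith
  qed
  have sym: "R (pi - x) = R x" for x
    by (simp add: R_def add.commute)
  have "\<forall>x. 0 < x \<and> x < pi \<longrightarrow> \<bar>R x\<bar> \<le> B'"
  proof (intro allI impI)
    fix x :: real assume x: "0 < x \<and> x < pi"
    show "\<bar>R x\<bar> \<le> B'"
    proof (cases "x \<le> pi/2")
      case True thus ?thesis using half x by auto
    next
      case False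
      hence "\<bar>R (pi - x)\<bar> \<le> B'" using half[of "pi - x"] x by auto
      thus ?thesis by (simp add: sym)
    qed
  qed
  thus ?thesis unfolding R_def by blast
qed

lemma zeta_summable: "s \<ge> 2 \<Longrightarrow> summable (\<lambda>n. 1 / real (Suc n) ^ s)"
proof -
  assume s: "s \<ge> 2"
  have "summable (\<lambda>n. inverse (real n ^ s))" by (rule inverse_power_summable[OF s])
  hence "summable (\<lambda>n. inverse (real (Suc n) ^ s))" by (subst summable_Suc_iff)
  thus ?thesis by (simp add: inverse_eq_divide)
qed

lemma sum_shift1: "m \<ge> 1 \<Longrightarrow> (\<Sum>k\<in>{1..<m}. g k) = (\<Sum>n<m-1. g (Suc n))"
proof -
  assume "m \<ge> 1"
  hence "{1..<m} = {Suc 0..<Suc (m-1)}" by auto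
  hence "(\<Sum>k\<in>{1..<m}. g k) = (\<Sum>n\<in>{0..<m-1}. g (Suc n))"
    by (simp only: sum.shift_bounds_Suc_ivl)
  thus ?thesis by (simp add: atLeast0LessThan)
qed

lemma zeta_split:
  assumes s: "s \<ge> 2" and m: "m \<ge> 1"
  shows "zeta_int s = (\<Sum>k\<in>{1..<m}. (1 / real k)^s) + (\<Sum>n. 1 / real (n + m) ^ s)"
proof -
  have "zeta_int s = (\<Sum>n. 1 / real (Suc (n + (m-1))) ^ s) + (\<Sum>n<m-1. 1 / real (Suc n) ^ s)"
    unfolding zeta_int_def by (rule suminf_split_initial_segment[OF zeta_summable[OF s]])
  moreover have "(\<lambda>n. 1 / real (Suc (n + (m-1))) ^ s) = (\<lambda>n. 1 / real (n + m) ^ s)"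
    using m by (intro ext) (simp add: Suc_diff_le)
  moreover have "(\<Sum>n<m-1. 1 / real (Suc n) ^ s) = (\<Sum>k\<in>{1..<m}. (1 / real k)^s)"
    using sum_shift1[OF m, of "\<lambda>k. (1 / real k)^s"] by (simp add: power_one_over)
  ultimately show ?thesis by simp
qed

lemma tail_summable: "s \<ge> 2 \<Longrightarrow> m \<ge> 1 \<Longrightarrow> summable (\<lambda>n. 1 / real (n + m) ^ s)"
proof -
  assume s: "s \<ge> 2" and m: "m \<ge> 1"
  have "summable (\<lambda>n. 1 / real (Suc (n + (m-1))) ^ s)"
    using summable_ignore_initial_segment[OF zeta_summable[OF s], of "m-1"] by simp
  moreover have "(\<lambda>n. 1 / real (Suc (n + (m-1))) ^ s) = (\<lambda>n. 1 / real (n + m) ^ s)"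
    using m by (intro ext) (simp add: Suc_diff_le)
  ultimately show ?thesis by simp
qed

lemma tail_bound:
  assumes s: "s \<ge> 2" and m: "m \<ge> 2"
  shows "0 \<le> (\<Sum>n. 1 / real (n + m) ^ s) \<and> (\<Sum>n. 1 / real (n + m) ^ s) \<le> 2 * (1 / real m)^(s-1)"
proof
  have sm: "summable (\<lambda>n. 1 / real (n + m) ^ s)" using tail_summable[OF s] m by simp
  show "0 \<le> (\<Sum>n. 1 / real (n + m) ^ s)" by (rule suminf_nonneg[OF sm]) simp
  define g where "g = (\<lambda>n::nat. 1 / (real n + real m - 1))"
  have "g \<longlonglongrightarrow> 0"
  proof -
    have "(\<lambda>n. 1 / real (n + (m-1))) \<longlonglongrightarrow> (0::real)"
      by (rule LIMSEQ_ignore_initial_segment[OF lim_1_over_n])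
    moreover have "(\<lambda>n. 1 / real (n + (m-1))) = g" using m by (auto simp: g_def of_nat_diff)
    ultimately show ?thesis by simp
  qed
  hence tel: "(\<lambda>n. g n - g (Suc n)) sums (g 0 - 0)" by (rule telescope_sums')
  define c where "c = (1 / real m)^(s-2)"
  have tel2: "(\<lambda>n. c * (g n - g (Suc n))) sums (c * (1 / (real m - 1)))"
    using sums_mult[OF tel, of c] by (simp add: g_def)
  have le: "1 / real (n + m) ^ s \<le> c * (g n - g (Suc n))" for n
  proof -
    define a where "a = real (n + m)"
    have a2: "a \<ge> 2" using m by (simp add: a_def)
    have e1: "g n - g (Suc n) = 1 / ((a - 1) * a)"
      using a2 by (simp add: g_def a_def field_simps)
    have e2: "1 / a ^ s = (1/a)^(s-2) * (1 / a^2)"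
    proof -
      have "a ^ s = a^(s-2) * a^2" using s by (metis le_add_diff_inverse2 power_add)
      thus ?thesis by (simp add: power_one_over)
    qed
    have e3: "(1/a)^(s-2) \<le> c"
      unfolding c_def using m a2 by (intro power_mono) (auto simp: a_def field_simps)
    have e4: "1 / a^2 \<le> 1 / ((a - 1) * a)"
      using a2 by (simp add: field_simps power2_eq_square)
    have e5: "0 \<le> 1 / a^2" "0 \<le> c" using a2 by (auto simp: c_def)
    have "1 / real (n + m) ^ s = (1/a)^(s-2) * (1 / a^2)" unfolding a_def[symmetric] by (rule e2)
    also have "\<dots> \<le> c * (1 / a^2)" by (rule mult_right_mono[OF e3 e5(1)])
    also have "\<dots> \<le> c * (1 / ((a - 1) * a))" by (rule mult_left_mono[OF e4 e5(2)])
    finally show ?thesis unfolding e1 .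
  qed
  have "(\<Sum>n. 1 / real (n + m) ^ s) \<le> (\<Sum>n. c * (g n - g (Suc n)))"
    by (rule suminf_le[OF le sm]) (use tel2 in \<open>simp add: sums_iff\<close>)
  also have "\<dots> = c * (1 / (real m - 1))" using tel2 by (simp add: sums_iff)
  also have "\<dots> \<le> c * (2 / real m)"
    using m by (intro mult_left_mono) (auto simp: c_def field_simps)
  also have "\<dots> = 2 * (1 / real m)^(s-1)"
  proof -
    have "s - 1 = Suc (s - 2)" using s by simp
    thus ?thesis by (simp add: c_def)
  qed
  finally show "(\<Sum>n. 1 / real (n + m) ^ s) \<le> 2 * (1 / real m)^(s-1)" .
qed

lemma vanish:
  fixes d :: "nat \<Rightarrow> real"
  assumes "\<forall>m\<ge>2. \<bar>\<Sum>j<n. d j * (1 / real m)^(2*j)\<bar> \<le> C * (1 / real m)^(2*n-1)"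
    and "j < n"
  shows "d j = 0"
  using assms
proof (induction n arbitrary: d C j)
  case 0 thus ?case by simp
next
  case (Suc n)
  have split: "(\<Sum>j<Suc n. d j * x^(2*j)) = d 0 + x^2 * (\<Sum>j<n. d (Suc j) * x^(2*j))" for x :: real
    by (subst sum.lessThan_Suc_shift) (simp add: sum_distrib_left power_add mult_ac power2_eq_square)
  have x0: "(\<lambda>m. 1 / real m) \<longlonglongrightarrow> (0::real)" by (rule lim_1_over_n)
  have t1: "(\<lambda>m. \<bar>\<Sum>j<Suc n. d j * (1 / real m)^(2*j)\<bar>) \<longlonglongrightarrow> \<bar>d 0 + 0^2 * (\<Sum>j<n. d (Suc j) * 0^(2*j))\<bar>"
    unfolding split by (intro tendsto_intros x0)
  have t2: "(\<lambda>m. C * (1 / real m)^(2*Suc n-1)) \<longlonglongrightarrow> C * 0^(2*Suc n-1)"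
    by (intro tendsto_intros x0)
  have "\<bar>d 0 + 0^2 * (\<Sum>j<n. d (Suc j) * 0^(2*j))\<bar> \<le> C * 0^(2*Suc n-1)"
    by (rule tendsto_le[OF sequentially_bot t2 t1]) (rule eventually_mono[OF eventually_ge_at_top[of "2::nat"]], use Suc.prems(1) in blast)
  hence d0: "d 0 = 0" by simp
  show ?case
  proof (cases j)
    case 0 thus ?thesis using d0 by simp
  next
    case (Suc j')
    hence j': "j' < n" using Suc.prems(2) by simp
    hence n1: "n \<ge> 1" by simp
    have "\<forall>m\<ge>2. \<bar>\<Sum>j<n. d (Suc j) * (1 / real m)^(2*j)\<bar> \<le> C * (1 / real m)^(2*n-1)"
    proof (intro allI impI)
      fix m :: nat assume m: "m \<ge> 2"
      define x where "x = 1 / real m"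
      have x: "x > 0" using m by (simp add: x_def)
      have P: "\<bar>\<Sum>j<Suc n. d j * x^(2*j)\<bar> \<le> C * x^(2*Suc n-1)"
        using Suc.prems(1) m unfolding x_def by blast
      hence "\<bar>d 0 + x^2 * (\<Sum>j<n. d (Suc j) * x^(2*j))\<bar> \<le> C * x^(2*Suc n-1)" unfolding split .
      hence "x^2 * \<bar>\<Sum>j<n. d (Suc j) * x^(2*j)\<bar> \<le> C * x^(2*Suc n-1)"
        by (simp only: d0 add_0_left abs_mult abs_power2)
      also have "C * x^(2*Suc n-1) = x^2 * (C * x^(2*n-1))"
      proof -
        have e: "2*Suc n-1 = 2 + (2*n-1)" using n1 by simp
        show ?thesis unfolding e power_add by (simp add: mult_ac)
      qed
      finally show "\<bar>\<Sum>j<n. d (Suc j) * (1 / real m)^(2*j)\<bar> \<le> C * (1 / real m)^(2*n-1)"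
        using x unfolding x_def by simp
    qed
    from Suc.IH[OF this j'] show ?thesis using Suc by simp
  qed
qed

lemma dowker_expand:
  fixes v m :: nat and c :: "nat \<Rightarrow> real" and Rv :: "real \<Rightarrow> real"
  assumes m: "m \<ge> 2"
    and Rv: "\<And>y. Rv y = (1 / sin y)^(2* v) - (\<Sum>j<v. c j * ((1/y)^(2* v-2*j) + (1/(pi-y))^(2* v-2*j)))"
  shows "dowker_sum m v = (\<Sum>k\<in>{1..<m}. Rv (real k * pi / real m))
     + (\<Sum>j<v. c j * (real m / pi)^(2* v-2*j) * (2 * (\<Sum>k\<in>{1..<m}. (1 / real k)^(2* v-2*j))))"
proof -
  define M where "M = real m"
  have M: "M > 0" using m by (simp add: M_def)
  define s where "s j = 2* v - 2*j" for j
  have t1: "(1 / (real k * pi / M))^(s j) = (M/pi)^(s j) * (1 / real k)^(s j)" for k j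
    by (simp add: power_divide power_one_over field_simps)
  have t2: "(1 / (pi - real k * pi / M))^(s j) = (M/pi)^(s j) * (1 / real (m - k))^(s j)"
    if k: "k \<in> {1..<m}" for k j
  proof -
    have "pi - real k * pi / M = real (m - k) * pi / M"
      using k M by (simp add: of_nat_diff M_def field_simps)
    show ?thesis unfolding \<open>pi - real k * pi / M = real (m - k) * pi / M\<close>
      by (simp add: power_divide power_one_over field_simps)
  qed
  have rev: "(\<Sum>k\<in>{1..<m}. (1 / real (m - k))^(s j)) = (\<Sum>k\<in>{1..<m}. (1 / real k)^(s j))" for j
  proof -
    have "(\<Sum>k\<in>{1..<m}. (1 / real (m - k))^(s j)) = (\<Sum>i\<in>{1..<m}. (1 / real (m - (m + 1 - Suc i)))^(s j))"
      by (rule sum.atLeastLessThan_rev)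
    also have "\<dots> = (\<Sum>k\<in>{1..<m}. (1 / real k)^(s j))"
      by (rule sum.cong) auto
    finally show ?thesis .
  qed
  have "dowker_sum m v = (\<Sum>k\<in>{1..<m}. Rv (real k * pi / M)
      + (\<Sum>j<v. c j * ((M/pi)^(s j) * (1 / real k)^(s j) + (M/pi)^(s j) * (1 / real (m - k))^(s j))))"
    unfolding dowker_sum_def
  proof (rule sum.cong)
    fix k assume k: "k \<in> {1..<m}"
    show "(1 / sin (real k * pi / real m)) ^ (2 * v) = Rv (real k * pi / M)
      + (\<Sum>j<v. c j * ((M/pi)^(s j) * (1 / real k)^(s j) + (M/pi)^(s j) * (1 / real (m - k))^(s j)))"
      unfolding Rv M_def[symmetric] using t1 t2[OF k] by (simp add: s_def)
  qed simp
  also have "\<dots> = (\<Sum>k\<in>{1..<m}. Rv (real k * pi / M))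
      + (\<Sum>j<v. c j * (M/pi)^(s j) * ((\<Sum>k\<in>{1..<m}. (1 / real k)^(s j)) + (\<Sum>k\<in>{1..<m}. (1 / real (m - k))^(s j))))"
    by (simp add: sum.distrib sum_distrib_left distrib_left mult.assoc sum.swap[of _ _ "{..<v}"])
  also have "\<dots> = (\<Sum>k\<in>{1..<m}. Rv (real k * pi / M))
      + (\<Sum>j<v. c j * (M/pi)^(s j) * (2 * (\<Sum>k\<in>{1..<m}. (1 / real k)^(s j))))"
    unfolding rev by (simp only: mult_2)
  finally show ?thesis by (simp add: M_def s_def)
qed

lemma key_bound:
  fixes v :: nat and q :: "nat \<Rightarrow> real"
  assumes v: "v \<ge> 1"
    and hq: "\<forall>m::nat. m \<ge> 1 \<longrightarrow> dowker_sum m v = (\<Sum>i\<le>v. q i * real m ^ (2 * i))"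
  shows "\<exists>K. \<forall>m\<ge>2. \<bar>\<Sum>j<v. (q (v-j) - 2 * cosec_num (2* v) j * zeta_int (2* v-2*j) / pi^(2* v-2*j)) * (1 / real m)^(2*j)\<bar>
            \<le> K * (1 / real m)^(2* v-1)"
proof -
  define c where "c j = cosec_num (2* v) j" for j
  define s where "s j = 2* v - 2*j" for j
  define A where "A j = 2 * c j * zeta_int (s j) / pi^(s j)" for j
  obtain B where B: "\<And>y. 0 < y \<and> y < pi \<Longrightarrow>
     \<bar>(1 / sin y)^(2* v) - (\<Sum>j<v. c j * ((1/y)^(2* v-2*j) + (1/(pi-y))^(2* v-2*j)))\<bar> \<le> B"
    using R_bound[OF v] unfolding c_def by blast
  define Rv where "Rv y = (1 / sin y)^(2* v) - (\<Sum>j<v. c j * ((1/y)^(2* v-2*j) + (1/(pi-y))^(2* v-2*j)))" for y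
  have B0: "B \<ge> 0" using B[of "pi/2"] pi_gt3 by linarith
  define K where "K = B + (\<Sum>j<v. 4 * \<bar>c j\<bar> / pi^(s j)) + \<bar>q 0\<bar>"
  show ?thesis
  proof (intro exI allI impI)
    fix m :: nat assume m: "m \<ge> 2"
    define M where "M = real m"
    define x where "x = 1 / M"
    have M: "M \<ge> 2" using m by (simp add: M_def)
    have x: "x > 0" "x \<le> 1" "M * x = 1" using M by (auto simp: x_def)
    define T where "T j = (\<Sum>n. 1 / real (n + m) ^ (s j))" for j
    have s2: "s j \<ge> 2" if "j < v" for j using that by (simp add: s_def)
    have Tb: "0 \<le> T j \<and> T j \<le> 2 * x^(s j - 1)" if "j < v" for j
      using tail_bound[OF s2[OF that] m] unfolding T_def x_def M_def .
    have Zs: "(\<Sum>k\<in>{1..<m}. (1 / real k)^(s j)) = zeta_int (s j) - T j" if "j < v" for j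
      using zeta_split[OF s2[OF that], of m] m unfolding T_def by simp
    have D: "dowker_sum m v = (\<Sum>k\<in>{1..<m}. Rv (real k * pi / real m))
       + (\<Sum>j<v. c j * (M / pi)^(s j) * (2 * (zeta_int (s j) - T j)))"
      unfolding dowker_expand[OF m Rv_def] M_def[symmetric] s_def[symmetric]
      by (intro arg_cong2[where f="(+)"] refl sum.cong) (simp_all only: lessThan_iff Zs)
    have pw: "(M / pi)^(s j) * x^(2* v) = x^(2*j) / pi^(s j)" if "j < v" for j
    proof -
      have "x^(2* v) = x^(s j) * x^(2*j)" using that by (simp add: s_def flip: power_add)
      hence "(M / pi)^(s j) * x^(2* v) = (M * x / pi)^(s j) * x^(2*j)"
        by (simp add: power_mult_distrib power_divide)
      thus ?thesis using x by (simp add: power_divide)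
    qed
    have D2: "dowker_sum m v * x^(2* v) = x^(2* v) * (\<Sum>k\<in>{1..<m}. Rv (real k * pi / real m))
       + (\<Sum>j<v. A j * x^(2*j) - 2 * c j * x^(2*j) / pi^(s j) * T j)"
    proof -
      have "(\<Sum>j<v. c j * (M / pi)^(s j) * (2 * (zeta_int (s j) - T j))) * x^(2* v)
          = (\<Sum>j<v. A j * x^(2*j) - 2 * c j * x^(2*j) / pi^(s j) * T j)"
        unfolding sum_distrib_right
      proof (rule sum.cong)
        fix j assume "j \<in> {..<v}"
        hence j: "j < v" by simp
        have "c j * (M / pi)^(s j) * (2 * (zeta_int (s j) - T j)) * x^(2* v)
            = c j * ((M / pi)^(s j) * x^(2* v)) * (2 * (zeta_int (s j) - T j))" by (simp add: mult_ac)
        also have "\<dots> = c j * (x^(2*j) / pi^(s j)) * (2 * (zeta_int (s j) - T j))" by (simp add: pw[OF j])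
        also have "\<dots> = A j * x^(2*j) - 2 * c j * x^(2*j) / pi^(s j) * T j"
          by (simp add: A_def field_simps)
        finally show "c j * (M / pi)^(s j) * (2 * (zeta_int (s j) - T j)) * x^(2* v)
            = A j * x^(2*j) - 2 * c j * x^(2*j) / pi^(s j) * T j" .
      qed simp
      note h = this
      show ?thesis unfolding D distrib_right h by (simp add: mult.commute)
    qed
    have H: "dowker_sum m v * x^(2* v) = (\<Sum>j<v. q (v-j) * x^(2*j)) + q 0 * x^(2* v)"
    proof -
      have hm: "dowker_sum m v = (\<Sum>i\<le>v. q i * M^(2*i))" using hq m by (simp add: M_def)
      have "dowker_sum m v * x^(2* v) = (\<Sum>i\<in>{0..v}. q i * x^(2* v-2*i))"
        unfolding hm sum_distrib_right atLeast0AtMost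
      proof (rule sum.cong)
        fix i assume "i \<in> {..v}"
        hence "x^(2* v) = x^(2*i) * x^(2* v-2*i)" by (simp flip: power_add)
        hence "M^(2*i) * x^(2* v) = (M*x)^(2*i) * x^(2* v-2*i)" by (simp add: power_mult_distrib)
        thus "q i * M^(2*i) * x^(2* v) = q i * x^(2* v-2*i)" using x by (simp add: mult.assoc)
      qed (simp_all)
      also have "\<dots> = (\<Sum>j\<in>{0..v}. q (v - j) * x^(2* v-2*(v-j)))"
        by (subst sum.atLeastAtMost_rev) simp
      also have "\<dots> = (\<Sum>j\<le>v. q (v - j) * x^(2*j))"
        unfolding atLeast0AtMost
      proof (rule sum.cong)
        fix j assume "j \<in> {..v}"
        hence "2* v - 2*(v-j) = 2*j" by auto
        thus "q (v-j) * x^(2* v-2*(v-j)) = q (v-j) * x^(2*j)" by simp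
      qed simp
      also have "\<dots> = (\<Sum>j<v. q (v - j) * x^(2*j)) + q 0 * x^(2* v)"
        by (simp add: lessThan_Suc_atMost[symmetric])
      finally show ?thesis .
    qed
    have E: "(\<Sum>j<v. (q (v-j) - A j) * x^(2*j)) = x^(2* v) * (\<Sum>k\<in>{1..<m}. Rv (real k * pi / real m))
       - (\<Sum>j<v. 2 * c j * x^(2*j) / pi^(s j) * T j) - q 0 * x^(2* v)"
      using D2 H by (simp add: sum_subtractf left_diff_distrib)
    have b1: "\<bar>x^(2* v) * (\<Sum>k\<in>{1..<m}. Rv (real k * pi / real m))\<bar> \<le> B * x^(2* v-1)"
    proof -
      have "\<bar>\<Sum>k\<in>{1..<m}. Rv (real k * pi / real m)\<bar> \<le> (\<Sum>k\<in>{1..<m}. B)"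
      proof (rule order.trans[OF sum_abs sum_mono])
        fix k assume k: "k \<in> {1..<m}"
        have "0 < real k * pi / real m" "real k * pi / real m < pi" using k by (auto simp: field_simps)
        thus "\<bar>Rv (real k * pi / real m)\<bar> \<le> B" unfolding Rv_def using B by blast
      qed
      also have "\<dots> = (M - 1) * B" using m by (simp add: M_def of_nat_diff)
      also have "\<dots> \<le> M * B" using B0 by (simp add: mult_right_mono)
      finally have "\<bar>x^(2* v) * (\<Sum>k\<in>{1..<m}. Rv (real k * pi / real m))\<bar> \<le> x^(2* v) * (M * B)"
        using x by (simp add: abs_mult mult_left_mono)
      also have "x^(2* v) * (M * B) = B * x^(2* v-1)"
      proof -
        have "x^(2* v) = x * x^(2* v-1)" using v by (simp flip: power_Suc)
        thus ?thesis using x by (simp add: mult_ac)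
      qed
      finally show ?thesis .
    qed
    have b2: "\<bar>\<Sum>j<v. 2 * c j * x^(2*j) / pi^(s j) * T j\<bar> \<le> (\<Sum>j<v. 4 * \<bar>c j\<bar> / pi^(s j)) * x^(2* v-1)"
      unfolding sum_distrib_right
    proof (rule order.trans[OF sum_abs sum_mono])
      fix j assume "j \<in> {..<v}"
      hence j: "j < v" by simp
      have e: "x^(2*j) * x^(s j - 1) = x^(2* v-1)" using j by (simp add: s_def flip: power_add)
      have "\<bar>2 * c j * x^(2*j) / pi^(s j) * T j\<bar> = 2 * \<bar>c j\<bar> * x^(2*j) / pi^(s j) * T j"
        using Tb[OF j] x by (simp add: abs_mult)
      also have "\<dots> \<le> 2 * \<bar>c j\<bar> * x^(2*j) / pi^(s j) * (2 * x^(s j - 1))"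
        using Tb[OF j] x by (intro mult_left_mono) auto
      also have "\<dots> = 4 * \<bar>c j\<bar> / pi^(s j) * (x^(2*j) * x^(s j - 1))" by (simp add: field_simps)
      finally show "\<bar>2 * c j * x^(2*j) / pi^(s j) * T j\<bar> \<le> 4 * \<bar>c j\<bar> / pi^(s j) * x^(2* v-1)"
        unfolding e .
    qed
    have b3: "\<bar>q 0 * x^(2* v)\<bar> \<le> \<bar>q 0\<bar> * x^(2* v-1)"
    proof -
      have "x^(2* v) \<le> x^(2* v-1)" using x by (intro power_decreasing) auto
      thus ?thesis using x by (simp add: abs_mult mult_left_mono)
    qed
    have "\<bar>\<Sum>j<v. (q (v-j) - A j) * x^(2*j)\<bar> \<le> K * x^(2* v-1)"
      unfolding E K_def using b1 b2 b3 by (simp add: algebra_simps) linarith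
    thus "\<bar>\<Sum>j<v. (q (v-j) - 2 * cosec_num (2* v) j * zeta_int (2* v-2*j) / pi^(2* v-2*j)) * (1 / real m)^(2*j)\<bar>
            \<le> K * (1 / real m)^(2* v-1)"
      by (simp add: A_def c_def s_def x_def M_def)
  qed
qed

lemma coefq:
  fixes v :: nat and q :: "nat \<Rightarrow> real"
  assumes v: "v \<ge> 1"
    and hq: "\<forall>m::nat. m \<ge> 1 \<longrightarrow> dowker_sum m v = (\<Sum>i\<le>v. q i * real m ^ (2 * i))"
    and j: "j < v"
  shows "q (v - j) = 2 * cosec_num (2 * v) j * zeta_int (2 * v - 2 * j) / pi ^ (2 * v - 2 * j)"
proof -
  obtain K where K: "\<forall>m\<ge>2. \<bar>\<Sum>j<v. (q (v-j) - 2 * cosec_num (2 * v) j * zeta_int (2 * v-2*j) / pi^(2 * v-2*j)) * (1 / real m)^(2*j)\<bar>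
            \<le> K * (1 / real m)^(2 * v-1)"
    using key_bound[OF v hq] by blast
  have "(\<lambda>j. q (v-j) - 2 * cosec_num (2 * v) j * zeta_int (2 * v-2*j) / pi^(2 * v-2*j)) j = 0"
    by (rule vanish[OF K j])
  thus ?thesis by simp
qed

lemma coefq':
  fixes v :: nat and q :: "nat \<Rightarrow> real"
  assumes v: "v \<ge> 1"
    and hq: "\<forall>m::nat. m \<ge> 1 \<longrightarrow> dowker_sum m v = (\<Sum>i\<le>v. q i * real m ^ (2 * i))"
    and i: "1 \<le> i" "i \<le> v"
  shows "q i = 2 / pi ^ (2 * i) * cosec_num (2 * v) (v - i) * zeta_int (2 * i)"
proof -
  have "q (v - (v - i)) = 2 * cosec_num (2 * v) (v - i) * zeta_int (2 * v - 2 * (v - i)) / pi ^ (2 * v - 2 * (v - i))"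
    using i by (intro coefq[OF v hq]) auto
  moreover have "v - (v - i) = i" "2 * v - 2 * (v - i) = 2 * i" using i by auto
  ultimately show ?thesis by simp
qed

lemma Gamma_nat: "n \<ge> 1 \<Longrightarrow> Gamma (real n) = fact (n - 1)"
  using Gamma_fact[of "n - 1", where 'a = real] by (simp add: of_nat_diff)

lemma alg2:
  fixes n F G P S :: real
  assumes "G > 0" "P > 0" "n \<ge> 0"
  shows "(n + 1/2) * (F / (P * G) * S) = ((2*n+2)*(2*n+1)*F) / (4*P*((n+1)*G)) * S"
proof -
  have d: "P * G \<noteq> 0" "4*P*((n+1)*G) \<noteq> 0" using assms by auto
  have "((2*n+2)*(2*n+1)*F) / (4*P*((n+1)*G)) = ((2*n+1)*F) / (2*(P*G))"
    using assms d by (simp add: field_simps)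
  thus ?thesis using d by (simp add: field_simps)
qed

lemma Gamma_half: "Gamma (real n + 1/2) = fact (2*n) / (4^n * fact n) * sqrt pi"
proof (induction n)
  case 0 thus ?case using Gamma_one_half_real by simp
next
  case (Suc n)
  have nz: "real n + 1/2 \<notin> \<int>\<^sub>\<le>\<^sub>0" using nonpos_Ints_nonpos[of "real n + 1/2"] by fastforce
  have "Gamma (real (Suc n) + 1/2) = Gamma ((real n + 1/2) + 1)" by (simp add: algebra_simps)
  also have "\<dots> = (real n + 1/2) * Gamma (real n + 1/2)" by (rule Gamma_plus1[OF nz])
  also have "\<dots> = (real n + 1/2) * (fact (2*n) / (4^n * fact n) * sqrt pi)" by (simp add: Suc.IH)
  also have "\<dots> = fact (2 * Suc n) / (4 ^ Suc n * fact (Suc n)) * sqrt pi"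
  proof -
    have f1: "fact (2 * Suc n) = real (2*n+2) * real (2*n+1) * (fact (2*n) :: real)"
      by (simp add: algebra_simps)
    have f2: "fact (Suc n) = real (n+1) * (fact n :: real)" by simp
    have f3: "(4::real) ^ Suc n = 4 * 4^n" by simp
    have G: "(fact n :: real) > 0" "(4::real)^n > 0" by auto
    have "real (2*n+2) = 2 * real n + 2" "real (2*n+1) = 2 * real n + 1" "real (n+1) = real n + 1" by auto
    thus ?thesis unfolding f1 f2 f3 using alg2[OF G, of "real n" "fact (2*n)" "sqrt pi"] by (simp add: add.commute)
  qed
  finally show ?case .
qed

lemma zeta2: "zeta_int 2 = pi^2 / 6"
proof -
  have "(\<lambda>n. 1 / real (Suc n) ^ 2) sums (pi^2 / 6)"
    using inverse_squares_sums by (simp add: add.commute)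
  thus ?thesis by (simp add: zeta_int_def sums_iff)
qed

theorem mainTheorem10:
  fixes v :: nat and q :: "nat \<Rightarrow> real"
  assumes hv: "v \<ge> 1"
    and hq: "\<forall>m::nat. m \<ge> 1 \<longrightarrow> dowker_sum m v = (\<Sum>i\<le>v. q i * real m ^ (2 * i))"
  shows "(q v = 2 * zeta_int (2 * v) / pi ^ (2 * v))
    \<and> (\<forall>i\<in>{1..v-1}.
           q i = 2 ^ (2 * v - 2 * i + 1) / pi ^ (2 * i) * (Gamma (real (2 * i)) / Gamma (real (2 * v)))
                 * esym_sq v (v - i) * zeta_int (2 * i)
         \<and> q i = 2 / pi ^ (2 * i) * cosec_num (2 * v) (v - i) * zeta_int (2 * i))
    \<and> q 0 = - (2 ^ (2 * v + 1)) * (\<Sum>n<v. (1 / (2 * pi) ^ (2 * v - 2 * n))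
                 * (Gamma (real (2 * v - 2 * n)) / Gamma (real (2 * v))) * esym_sq v n * zeta_int (2 * v - 2 * n))
    \<and> q 0 = - 2 * (\<Sum>n<v. (1 / pi ^ (2 * v - 2 * n)) * cosec_num (2 * v) n * zeta_int (2 * v - 2 * n))
    \<and> q 1 = 1 / 6 * (Gamma (real v) * Gamma (1 / 2) / Gamma (real v + 1 / 2))"
proof -
  note Q = coefq'[OF hv hq]
  have GV: "Gamma (real (2 * v)) = fact (2 * v - 1)" using hv by (intro Gamma_nat) simp
  have P1: "q v = 2 * zeta_int (2 * v) / pi ^ (2 * v)"
    using Q[of v] hv by (simp add: cosec_0)
  have P2: "\<forall>i\<in>{1..v-1}.
           q i = 2 ^ (2 * v - 2 * i + 1) / pi ^ (2 * i) * (Gamma (real (2 * i)) / Gamma (real (2 * v)))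
                 * esym_sq v (v - i) * zeta_int (2 * i)
         \<and> q i = 2 / pi ^ (2 * i) * cosec_num (2 * v) (v - i) * zeta_int (2 * i)"
  proof
    fix i assume i: "i \<in> {1..v-1}"
    have qi: "q i = 2 / pi ^ (2 * i) * cosec_num (2 * v) (v - i) * zeta_int (2 * i)"
      using Q i by auto
    have cc: "cosec_num (2 * v) (v - i) = 4^(v-i) * fact (2*i - 1) / fact (2 * v - 1) * esym_sq v (v - i)"
    proof -
      have "cosec_num (2 * v) (v - i) = C2 v (v - i)" using i hv by (intro cosec_closed) auto
      moreover have "2 * v - 2 * (v - i) - 1 = 2 * i - 1" using i by auto
      ultimately show ?thesis by (simp add: C2_def)
    qed
    have GI: "Gamma (real (2 * i)) = fact (2 * i - 1)" using i by (intro Gamma_nat) auto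
    have p2: "(2::real) ^ (2 * v - 2 * i + 1) = 2 * 4^(v-i)"
    proof -
      have "2 * v - 2 * i + 1 = Suc (2 * (v - i))" using i by auto
      thus ?thesis by (simp add: power_mult)
    qed
    show "q i = 2 ^ (2 * v - 2 * i + 1) / pi ^ (2 * i) * (Gamma (real (2 * i)) / Gamma (real (2 * v)))
                 * esym_sq v (v - i) * zeta_int (2 * i)
         \<and> q i = 2 / pi ^ (2 * i) * cosec_num (2 * v) (v - i) * zeta_int (2 * i)"
      unfolding GI GV p2 qi cc by simp
  qed
  have sum0: "(\<Sum>i\<le>v. q i) = 0"
  proof -
    have "dowker_sum 1 v = 0" by (simp add: dowker_sum_def)
    thus ?thesis using hq[rule_format, of 1] by simp
  qed
  have reidx: "(\<Sum>i\<le>v. q i) = q 0 + (\<Sum>n<v. q (v - n))"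
  proof -
    have "(\<Sum>i\<le>v. q i) = (\<Sum>i\<in>{0..v}. q (v + 0 - i))"
      unfolding atLeast0AtMost[symmetric] by (rule sum.atLeastAtMost_rev)
    also have "\<dots> = (\<Sum>n\<le>v. q (v - n))" by (simp add: atLeast0AtMost)
    also have "\<dots> = (\<Sum>n<v. q (v - n)) + q 0" by (simp add: lessThan_Suc_atMost[symmetric])
    finally show ?thesis by simp
  qed
  have qvn: "q (v - n) = 2 / pi ^ (2 * v - 2 * n) * cosec_num (2 * v) n * zeta_int (2 * v - 2 * n)"
    if n: "n < v" for n
  proof -
    have "q (v - n) = 2 / pi ^ (2 * (v - n)) * cosec_num (2 * v) (v - (v - n)) * zeta_int (2 * (v - n))"
      using n by (intro Q) auto
    moreover have "v - (v - n) = n" "2 * (v - n) = 2 * v - 2 * n" using n by auto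
    ultimately show ?thesis by simp
  qed
  have P4: "q 0 = - 2 * (\<Sum>n<v. (1 / pi ^ (2 * v - 2 * n)) * cosec_num (2 * v) n * zeta_int (2 * v - 2 * n))"
  proof -
    have "q 0 = - (\<Sum>n<v. q (v - n))" using sum0 reidx by simp
    also have "(\<Sum>n<v. q (v - n)) = 2 * (\<Sum>n<v. (1 / pi ^ (2 * v - 2 * n)) * cosec_num (2 * v) n * zeta_int (2 * v - 2 * n))"
      unfolding sum_distrib_left by (rule sum.cong) (simp_all add: qvn)
    finally show ?thesis by simp
  qed
  have P3: "q 0 = - (2 ^ (2 * v + 1)) * (\<Sum>n<v. (1 / (2 * pi) ^ (2 * v - 2 * n))
                 * (Gamma (real (2 * v - 2 * n)) / Gamma (real (2 * v))) * esym_sq v n * zeta_int (2 * v - 2 * n))"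
  proof -
    have "(2 ^ (2 * v + 1)) * (\<Sum>n<v. (1 / (2 * pi) ^ (2 * v - 2 * n))
                 * (Gamma (real (2 * v - 2 * n)) / Gamma (real (2 * v))) * esym_sq v n * zeta_int (2 * v - 2 * n))
       = 2 * (\<Sum>n<v. (1 / pi ^ (2 * v - 2 * n)) * cosec_num (2 * v) n * zeta_int (2 * v - 2 * n))"
      unfolding sum_distrib_left
    proof (rule sum.cong)
      fix n assume "n \<in> {..<v}"
      hence n: "n < v" by simp
      have cc: "cosec_num (2 * v) n = 4^n * fact (2 * v - 2 * n - 1) / fact (2 * v - 1) * esym_sq v n"
        using cosec_closed[OF hv n] by (simp add: C2_def)
      have GN: "Gamma (real (2 * v - 2 * n)) = fact (2 * v - 2 * n - 1)" using n by (intro Gamma_nat) auto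
      have p: "(2::real) ^ (2 * v + 1) = 2 ^ (2 * v - 2 * n) * (2 * 4 ^ n)"
      proof -
        have e: "(2 * v - 2 * n) + Suc (2 * n) = 2 * v + 1" using n by auto
        have "(2::real) ^ (2 * v + 1) = 2 ^ ((2 * v - 2 * n) + Suc (2 * n))" unfolding e ..
        also have "\<dots> = 2 ^ (2 * v - 2 * n) * 2 ^ Suc (2 * n)" by (rule power_add)
        also have "(2::real) ^ Suc (2 * n) = 2 * 4 ^ n" by (simp add: power_mult)
        finally show ?thesis .
      qed
      have pp: "(2 * pi) ^ (2 * v - 2 * n) = 2 ^ (2 * v - 2 * n) * pi ^ (2 * v - 2 * n)"
        by (simp add: power_mult_distrib)
      show "2 ^ (2 * v + 1) * (1 / (2 * pi) ^ (2 * v - 2 * n)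
                 * (Gamma (real (2 * v - 2 * n)) / Gamma (real (2 * v))) * esym_sq v n * zeta_int (2 * v - 2 * n))
          = 2 * (1 / pi ^ (2 * v - 2 * n) * cosec_num (2 * v) n * zeta_int (2 * v - 2 * n))"
        unfolding p pp GN GV cc by (simp add: field_simps)
    qed simp
    thus ?thesis using P4 by simp
  qed
  have P5: "q 1 = 1 / 6 * (Gamma (real v) * Gamma (1 / 2) / Gamma (real v + 1 / 2))"
  proof -
    have q1: "q 1 = 2 / pi^2 * cosec_num (2 * v) (v - 1) * zeta_int 2" using Q[of 1] hv by simp
    have cc: "cosec_num (2 * v) (v - 1) = 4^(v-1) / fact (2 * v - 1) * fact (v - 1)^2"
    proof -
      have "cosec_num (2 * v) (v - 1) = C2 v (v - 1)" using hv by (intro cosec_closed) auto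
      moreover have "2 * v - 2 * (v - 1) - 1 = 1" using hv by auto
      ultimately show ?thesis using esym_last[OF hv] by (simp add: C2_def)
    qed
    have fv: "fact v = real v * (fact (v - 1) :: real)" using hv by (cases v) auto
    have f2v: "fact (2 * v) = real (2 * v) * (fact (2 * v - 1) :: real)" using hv by (cases v) auto
    have p4: "(4::real)^v = 4 * 4^(v-1)" using hv by (cases v) auto
    have pos: "fact (2 * v - 1) > (0::real)" "fact (v - 1) > (0::real)" "real v > 0" "sqrt pi > 0" using hv by auto
    show ?thesis unfolding q1 cc Gamma_half Gamma_nat[OF hv] Gamma_one_half_real zeta2 fv f2v p4
      using pos by (simp add: field_simps power2_eq_square)
  qed
  show ?thesis using P1 P2 P3 P4 P5 by blast
qed

end
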